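(* Let $G$ be a group, $\mathcal{C}$ a (strict) monoidal category and $T$ a partial action of $G$ on $\mathcal{C}$ generated by a family of central idempotent objects $\{\mathbb{1}_g\}_{g\in G}$. Then for all $g,h\in G$ there is an isomorphism $\varphi^g_{gh}\colon\mathbb{1}_g\otimes\mathbb{1}_{gh}\to T_g(\mathbb{1}_{g^{-1}}\otimes\mathbb{1}_h)$.
   Context: Central idempotent: an object $e$ of $\mathcal{C}$ with an isomorphism $\Phi_e\colon e\otimes e\to e$ and a natural isomorphism $\sigma^e\colon e\otimes-\Rightarrow-\otimes e$ satisfying $\Phi_e(e\otimes\Phi_e)=\Phi_e(\Phi_e\otimes e)$, $\Phi_e\sigma^e_e=\Phi_e$, $(A\otimes\Phi_e)(\sigma^e_A\otimes e)(e\otimes\sigma^e_A)=\sigma^e_A(\Phi_e\otimes A)$ and $\sigma^e_{A\otimes B}=(A\otimes\sigma^e_B)(\sigma^e_A\otimes B)$. For a subcategory $\mathcal{D}$, $\overline{\mathcal{D}}$ is the smallest subcategory containing $\mathcal{D}$ closed under isomorphisms; $e\otimes\mathcal{C}$ is the subcategory of objects $e\otimes X$ and morphisms $e\otimes f$. For a central idempotent $e$, $\overline{e\otimes\mathcal{C}}$ is an ideal of $\mathcal{C}$ (closed under isomorphisms and under tensoring on either side by arbitrary objects) and is a monoidal category with unit $e$. A partial action of $G$ on $\mathcal{C}$ generated by central idempotents $\{\mathbb{1}_g\}_{g\in G}$ consists of: the ideals $\mathcal{C}_g=\overline{\mathbb{1}_g\otimes\mathcal{C}}$ with $\mathbb{1}_e=\mathbb{1}$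 the unit of $\mathcal{C}$ (so $\mathcal{C}_e=\mathcal{C}$); monoidal equivalences $(T_g,J^g)\colon\mathcal{C}_{g^{-1}}\to\mathcal{C}_g$, where $J^g\colon T_g(-)\otimes T_g(-)\Rightarrow T_g(-\otimes-)$ is a natural isomorphism satisfying the hexagon axiom and there is an isomorphism $\varphi^g\colon\mathbb{1}_g\to T_g(\mathbb{1}_{g^{-1}})$ compatible with the unit constraints; such that the restriction of $T_g$ to $\mathcal{C}_{g^{-1}}\cap\mathcal{C}_h$ is a semigroupal (here monoidal) equivalence onto $\mathcal{C}_g\cap\mathcal{C}_{gh}$; a natural isomorphism of semigroupal functors $u\colon\mathrm{Id}_{\mathcal{C}}\Rightarrow T_e$ (i.e. $J^e_{X,Y}\circ(u_X\otimes u_Y)=u_{X\otimes Y}$); and natural isomorphisms $\gamma_{g,h}\colon T_gT_h\Rightarrow T_{gh}$ of functors $\mathcal{C}_{h^{-1}}\cap\mathcal{C}_{h^{-1}g^{-1}}\to\mathcal{C}_g\cap\mathcal{C}_{gh}$ satisfying $J^{gh}_{X,Y}\circ((\gamma_{g,h})_X\otimes(\gamma_{g,h})_Y)=(\gamma_{g,h})_{X\otimes Y}\circ T_g(J^h_{X,Y})\circ J^g_{T_h(X),T_h(Y)}$; moreover $(\gamma_{gh,k})_X\circ(\gamma_{g,h})_{T_k(X)}=(\gamma_{g,hk})_X\circ T_g((\gamma_{h,k})_X)$ for $X\in\mathcal{C}_{k^{-1}}\cap\mathcal{C}_{k^{-1}h^{-1}}\cap\mathcal{C}_{k^{-1}h^{-1}g^{-1}}$,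 and for $X\in\mathcal{C}_{g^{-1}}$ the morphisms $u_{T_g(X)}$ and $(\gamma_{e,g})_X$ are mutually inverse, as are $T_g(u_X)$ and $(\gamma_{g,e})_X$. *)

theory Defs
  imports Main
begin

record ('o, 'm) mcat =
  Ob  :: "'o set"
  Ar  :: "'m set"
  src :: "'m \<Rightarrow> 'o"
  tgt :: "'m \<Rightarrow> 'o"
  idm :: "'o \<Rightarrow> 'm"
  cmp :: "'m \<Rightarrow> 'm \<Rightarrow> 'm"   (* cmp C g f = g \<circ> f *)
  tno :: "'o \<Rightarrow> 'o \<Rightarrow> 'o"
  tnm :: "'m \<Rightarrow> 'm \<Rightarrow> 'm"
  unt :: "'o"

definition hom :: "('o,'m) mcat \<Rightarrow> 'm \<Rightarrow> 'o \<Rightarrow> 'o \<Rightarrow> bool" where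
  "hom C f X Y \<longleftrightarrow> f \<in> Ar C \<and> src C f = X \<and> tgt C f = Y"

definition strict_monoidal_cat :: "('o,'m) mcat \<Rightarrow> bool" where
  "strict_monoidal_cat C \<longleftrightarrow>
     (\<forall>f\<in>Ar C. src C f \<in> Ob C \<and> tgt C f \<in> Ob C)
   \<and> (\<forall>X\<in>Ob C. hom C (idm C X) X X)
   \<and> (\<forall>f\<in>Ar C. \<forall>g\<in>Ar C. src C g = tgt C f \<longrightarrow> hom C (cmp C g f) (src C f) (tgt C g))
   \<and> (\<forall>f\<in>Ar C. cmp C f (idm C (src C f)) = f \<and> cmp C (idm C (tgt C f)) f = f)
   \<and> (\<forall>f\<in>Ar C. \<forall>g\<in>Ar C. \<forall>h\<in>Ar C. src C g = tgt C f \<and> src C h = tgt C g \<longrightarrow>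
         cmp C h (cmp C g f) = cmp C (cmp C h g) f)
   \<and> unt C \<in> Ob C
   \<and> (\<forall>X\<in>Ob C. \<forall>Y\<in>Ob C. tno C X Y \<in> Ob C)
   \<and> (\<forall>f\<in>Ar C. \<forall>g\<in>Ar C. hom C (tnm C f g) (tno C (src C f) (src C g)) (tno C (tgt C f) (tgt C g)))
   \<and> (\<forall>X\<in>Ob C. \<forall>Y\<in>Ob C. tnm C (idm C X) (idm C Y) = idm C (tno C X Y))
   \<and> (\<forall>f\<in>Ar C. \<forall>f'\<in>Ar C. \<forall>g\<in>Ar C. \<forall>g'\<in>Ar C. src C f' = tgt C f \<and> src C g' = tgt C g \<longrightarrow>
         tnm C (cmp C f' f) (cmp C g' g) = cmp C (tnm C f' g') (tnm C f g))
   \<and> (\<forall>X\<in>Ob C. \<forall>Y\<in>Ob C. \<forall>Z\<in>Ob C. tno C (tno C X Y) Z = tno C X (tno C Y Z))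
   \<and> (\<forall>X\<in>Ob C. tno C (unt C) X = X \<and> tno C X (unt C) = X)
   \<and> (\<forall>f\<in>Ar C. \<forall>g\<in>Ar C. \<forall>h\<in>Ar C. tnm C (tnm C f g) h = tnm C f (tnm C g h))
   \<and> (\<forall>f\<in>Ar C. tnm C (idm C (unt C)) f = f \<and> tnm C f (idm C (unt C)) = f)"

definition iso_in :: "('o,'m) mcat \<Rightarrow> 'm set \<Rightarrow> 'm \<Rightarrow> bool" where
  "iso_in C M f \<longleftrightarrow> f \<in> M \<and> (\<exists>g\<in>M. src C g = tgt C f \<and> tgt C g = src C f \<and>
       cmp C g f = idm C (src C f) \<and> cmp C f g = idm C (tgt C f))"

definition iso_arr :: "('o,'m) mcat \<Rightarrow> 'm \<Rightarrow> bool" where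
  "iso_arr C f \<longleftrightarrow> iso_in C (Ar C) f"

definition central_idempotent :: "('o,'m) mcat \<Rightarrow> 'o \<Rightarrow> 'm \<Rightarrow> ('o \<Rightarrow> 'm) \<Rightarrow> bool" where
  "central_idempotent C e \<Phi> \<sigma> \<longleftrightarrow>
     e \<in> Ob C
   \<and> hom C \<Phi> (tno C e e) e \<and> iso_arr C \<Phi>
   \<and> (\<forall>A\<in>Ob C. hom C (\<sigma> A) (tno C e A) (tno C A e) \<and> iso_arr C (\<sigma> A))
   \<and> (\<forall>f\<in>Ar C. cmp C (\<sigma> (tgt C f)) (tnm C (idm C e) f) = cmp C (tnm C f (idm C e)) (\<sigma> (src C f)))
   \<and> cmp C \<Phi> (tnm C (idm C e) \<Phi>) = cmp C \<Phi> (tnm C \<Phi> (idm C e))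
   \<and> cmp C \<Phi> (\<sigma> e) = \<Phi>
   \<and> (\<forall>A\<in>Ob C. cmp C (cmp C (tnm C (idm C A) \<Phi>) (tnm C (\<sigma> A) (idm C e))) (tnm C (idm C e) (\<sigma> A))
                 = cmp C (\<sigma> A) (tnm C \<Phi> (idm C A)))
   \<and> (\<forall>A\<in>Ob C. \<forall>B\<in>Ob C. \<sigma> (tno C A B) = cmp C (tnm C (idm C A) (\<sigma> B)) (tnm C (\<sigma> A) (idm C B)))"

definition subcat :: "('o,'m) mcat \<Rightarrow> 'o set \<Rightarrow> 'm set \<Rightarrow> bool" where
  "subcat C Obs M \<longleftrightarrow> Obs \<subseteq> Ob C \<and> M \<subseteq> Ar C
     \<and> (\<forall>f\<in>M. src C f \<in> Obs \<and> tgt C f \<in> Obs)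
     \<and> (\<forall>X\<in>Obs. idm C X \<in> M)
     \<and> (\<forall>f\<in>M. \<forall>g\<in>M. src C g = tgt C f \<longrightarrow> cmp C g f \<in> M)"

definition iso_closed :: "('o,'m) mcat \<Rightarrow> 'o set \<Rightarrow> 'm set \<Rightarrow> bool" where
  "iso_closed C Obs M \<longleftrightarrow> (\<forall>i. iso_arr C i \<and> src C i \<in> Obs \<longrightarrow> tgt C i \<in> Obs \<and> i \<in> M)"

definition clo_ob :: "('o,'m) mcat \<Rightarrow> 'o set \<Rightarrow> 'm set \<Rightarrow> 'o set" where
  "clo_ob C Ob0s M0 = \<Inter>{Obs. \<exists>M. subcat C Obs M \<and> iso_closed C Obs M \<and> Ob0s \<subseteq> Obs \<and> M0 \<subseteq> M}"

definition clo_ar :: "('o,'m) mcat \<Rightarrow> 'o set \<Rightarrow> 'm set \<Rightarrow> 'm set" where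
  "clo_ar C Ob0s M0 = \<Inter>{M. \<exists>Obs. subcat C Obs M \<and> iso_closed C Obs M \<and> Ob0s \<subseteq> Obs \<and> M0 \<subseteq> M}"

definition idl_ob :: "('o,'m) mcat \<Rightarrow> 'o \<Rightarrow> 'o set" where
  "idl_ob C e = clo_ob C {tno C e X | X. X \<in> Ob C} {tnm C (idm C e) f | f. f \<in> Ar C}"

definition idl_ar :: "('o,'m) mcat \<Rightarrow> 'o \<Rightarrow> 'm set" where
  "idl_ar C e = clo_ar C {tno C e X | X. X \<in> Ob C} {tnm C (idm C e) f | f. f \<in> Ar C}"

definition is_functor :: "('o,'m) mcat \<Rightarrow> 'o set \<Rightarrow> 'm set \<Rightarrow> 'o set \<Rightarrow> 'm set
     \<Rightarrow> ('o \<Rightarrow> 'o) \<Rightarrow> ('m \<Rightarrow> 'm) \<Rightarrow> bool" where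
  "is_functor C Ob1s M1 Ob2s M2 Fo Fm \<longleftrightarrow>
     (\<forall>X\<in>Ob1s. Fo X \<in> Ob2s \<and> Fm (idm C X) = idm C (Fo X))
   \<and> (\<forall>f\<in>M1. Fm f \<in> M2 \<and> src C (Fm f) = Fo (src C f) \<and> tgt C (Fm f) = Fo (tgt C f))
   \<and> (\<forall>f\<in>M1. \<forall>g\<in>M1. src C g = tgt C f \<longrightarrow> Fm (cmp C g f) = cmp C (Fm g) (Fm f))"

definition is_equivalence :: "('o,'m) mcat \<Rightarrow> 'o set \<Rightarrow> 'm set \<Rightarrow> 'o set \<Rightarrow> 'm set
     \<Rightarrow> ('o \<Rightarrow> 'o) \<Rightarrow> ('m \<Rightarrow> 'm) \<Rightarrow> bool" where
  "is_equivalence C Ob1s M1 Ob2s M2 Fo Fm \<longleftrightarrow>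
     is_functor C Ob1s M1 Ob2s M2 Fo Fm
   \<and> (\<forall>f\<in>M1. \<forall>f'\<in>M1. src C f = src C f' \<and> tgt C f = tgt C f' \<and> Fm f = Fm f' \<longrightarrow> f = f')
   \<and> (\<forall>X\<in>Ob1s. \<forall>Y\<in>Ob1s. \<forall>k\<in>M2. src C k = Fo X \<and> tgt C k = Fo Y \<longrightarrow>
         (\<exists>f\<in>M1. src C f = X \<and> tgt C f = Y \<and> Fm f = k))
   \<and> (\<forall>Z\<in>Ob2s. \<exists>X\<in>Ob1s. \<exists>i. hom C i (Fo X) Z \<and> iso_in C M2 i)"

text \<open>Semigroupal structure J on a functor (the associator of C is the identity).\<close>
definition semigroupal :: "('o,'m) mcat \<Rightarrow> 'o set \<Rightarrow> 'm set \<Rightarrow> 'o set \<Rightarrow> 'm set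
     \<Rightarrow> ('o \<Rightarrow> 'o) \<Rightarrow> ('m \<Rightarrow> 'm) \<Rightarrow> ('o \<Rightarrow> 'o \<Rightarrow> 'm) \<Rightarrow> bool" where
  "semigroupal C Ob1s M1 Ob2s M2 Fo Fm J \<longleftrightarrow>
     (\<forall>X\<in>Ob1s. \<forall>Y\<in>Ob1s. hom C (J X Y) (tno C (Fo X) (Fo Y)) (Fo (tno C X Y)) \<and> iso_in C M2 (J X Y))
   \<and> (\<forall>f\<in>M1. \<forall>g\<in>M1. cmp C (J (tgt C f) (tgt C g)) (tnm C (Fm f) (Fm g))
                      = cmp C (Fm (tnm C f g)) (J (src C f) (src C g)))
   \<and> (\<forall>X\<in>Ob1s. \<forall>Y\<in>Ob1s. \<forall>Z\<in>Ob1s.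
        cmp C (J (tno C X Y) Z) (tnm C (J X Y) (idm C (Fo Z)))
      = cmp C (J X (tno C Y Z)) (tnm C (idm C (Fo X)) (J Y Z)))"

text \<open>Monoidal structure on a tensor-closed subcategory (Obs, M) with unit U and unit
  constraints l, r (associativity constraints are identities, as C is strict).\<close>
definition monoidal_sub :: "('o,'m) mcat \<Rightarrow> 'o set \<Rightarrow> 'm set \<Rightarrow> 'o
     \<Rightarrow> ('o \<Rightarrow> 'm) \<Rightarrow> ('o \<Rightarrow> 'm) \<Rightarrow> bool" where
  "monoidal_sub C Obs M U l r \<longleftrightarrow>
     U \<in> Obs
   \<and> (\<forall>X\<in>Obs. hom C (l X) (tno C U X) X \<and> iso_in C M (l X))
   \<and> (\<forall>X\<in>Obs. hom C (r X) (tno C X U) X \<and> iso_in C M (r X))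
   \<and> (\<forall>f\<in>M. cmp C (l (tgt C f)) (tnm C (idm C U) f) = cmp C f (l (src C f)))
   \<and> (\<forall>f\<in>M. cmp C (r (tgt C f)) (tnm C f (idm C U)) = cmp C f (r (src C f)))
   \<and> (\<forall>X\<in>Obs. \<forall>Y\<in>Obs. tnm C (r X) (idm C Y) = tnm C (idm C X) (l Y))"

definition monoidal_equivalence :: "('o,'m) mcat \<Rightarrow> 'o set \<Rightarrow> 'm set \<Rightarrow> 'o \<Rightarrow> 'o set \<Rightarrow> 'm set \<Rightarrow> 'o
     \<Rightarrow> ('o \<Rightarrow> 'o) \<Rightarrow> ('m \<Rightarrow> 'm) \<Rightarrow> ('o \<Rightarrow> 'o \<Rightarrow> 'm) \<Rightarrow> 'm \<Rightarrow> bool" where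
  "monoidal_equivalence C Ob1s M1 U1 Ob2s M2 U2 Fo Fm J \<phi> \<longleftrightarrow>
     is_equivalence C Ob1s M1 Ob2s M2 Fo Fm
   \<and> semigroupal C Ob1s M1 Ob2s M2 Fo Fm J
   \<and> hom C \<phi> U2 (Fo U1) \<and> iso_in C M2 \<phi>
   \<and> (\<exists>l1 r1 l2 r2. monoidal_sub C Ob1s M1 U1 l1 r1 \<and> monoidal_sub C Ob2s M2 U2 l2 r2
       \<and> (\<forall>X\<in>Ob1s. l2 (Fo X) = cmp C (Fm (l1 X)) (cmp C (J U1 X) (tnm C \<phi> (idm C (Fo X)))))
       \<and> (\<forall>X\<in>Ob1s. r2 (Fo X) = cmp C (Fm (r1 X)) (cmp C (J X U1) (tnm C (idm C (Fo X)) \<phi>))))"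

text \<open>The group G is a type of class group_add (written additively: g + h is gh,
  - g is the inverse, 0 is the neutral element e).
  Data: one g = \<one>_g with \<Phi> g, \<sigma> g; T g = (To g, Tm g); J g; \<phi> g; u; \<gamma> g h.\<close>

definition partial_action ::
  "('o,'m) mcat \<Rightarrow> ('g::group_add \<Rightarrow> 'o) \<Rightarrow> ('g \<Rightarrow> 'm) \<Rightarrow> ('g \<Rightarrow> 'o \<Rightarrow> 'm)
   \<Rightarrow> ('g \<Rightarrow> 'o \<Rightarrow> 'o) \<Rightarrow> ('g \<Rightarrow> 'm \<Rightarrow> 'm) \<Rightarrow> ('g \<Rightarrow> 'o \<Rightarrow> 'o \<Rightarrow> 'm) \<Rightarrow> ('g \<Rightarrow> 'm)
   \<Rightarrow> ('o \<Rightarrow> 'm) \<Rightarrow> ('g \<Rightarrow> 'g \<Rightarrow> 'o \<Rightarrow> 'm) \<Rightarrow> bool" where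
  "partial_action C one \<Phi> \<sigma> To Tm J \<phi> u \<gamma> \<longleftrightarrow>
     (\<forall>g. central_idempotent C (one g) (\<Phi> g) (\<sigma> g))
   \<and> one 0 = unt C
   \<comment> \<open>T_g : C_{g^-1} \<rightarrow> C_g monoidal equivalence\<close>
   \<and> (\<forall>g. monoidal_equivalence C (idl_ob C (one (- g))) (idl_ar C (one (- g))) (one (- g))
                                  (idl_ob C (one g)) (idl_ar C (one g)) (one g)
                                  (To g) (Tm g) (J g) (\<phi> g))
   \<comment> \<open>restriction C_{g^-1} \<inter> C_h \<rightarrow> C_g \<inter> C_{gh} is a semigroupal equivalence\<close>
   \<and> (\<forall>g h. is_equivalence C
               (idl_ob C (one (- g)) \<inter> idl_ob C (one h)) (idl_ar C (one (- g)) \<inter> idl_ar C (one h))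
               (idl_ob C (one g) \<inter> idl_ob C (one (g + h))) (idl_ar C (one g) \<inter> idl_ar C (one (g + h)))
               (To g) (Tm g)
          \<and> semigroupal C
               (idl_ob C (one (- g)) \<inter> idl_ob C (one h)) (idl_ar C (one (- g)) \<inter> idl_ar C (one h))
               (idl_ob C (one g) \<inter> idl_ob C (one (g + h))) (idl_ar C (one g) \<inter> idl_ar C (one (g + h)))
               (To g) (Tm g) (J g))
   \<comment> \<open>u : Id \<Rightarrow> T_e natural isomorphism of semigroupal functors\<close>
   \<and> (\<forall>X\<in>Ob C. hom C (u X) X (To 0 X) \<and> iso_arr C (u X))
   \<and> (\<forall>f\<in>Ar C. cmp C (u (tgt C f)) f = cmp C (Tm 0 f) (u (src C f)))
   \<and> (\<forall>X\<in>Ob C. \<forall>Y\<in>Ob C. cmp C (J 0 X Y) (tnm C (u X) (u Y)) = u (tno C X Y))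
   \<comment> \<open>\<gamma>_{g,h} : T_g T_h \<Rightarrow> T_{gh} on C_{h^-1} \<inter> C_{h^-1 g^-1}, valued in C_g \<inter> C_{gh}\<close>
   \<and> (\<forall>g h. \<forall>X\<in>idl_ob C (one (- h)) \<inter> idl_ob C (one (- h + - g)).
          hom C (\<gamma> g h X) (To g (To h X)) (To (g + h) X)
        \<and> iso_in C (idl_ar C (one g) \<inter> idl_ar C (one (g + h))) (\<gamma> g h X))
   \<and> (\<forall>g h. \<forall>f\<in>idl_ar C (one (- h)) \<inter> idl_ar C (one (- h + - g)).
          cmp C (\<gamma> g h (tgt C f)) (Tm g (Tm h f)) = cmp C (Tm (g + h) f) (\<gamma> g h (src C f)))
   \<and> (\<forall>g h. \<forall>X\<in>idl_ob C (one (- h)) \<inter> idl_ob C (one (- h + - g)).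
        \<forall>Y\<in>idl_ob C (one (- h)) \<inter> idl_ob C (one (- h + - g)).
          cmp C (J (g + h) X Y) (tnm C (\<gamma> g h X) (\<gamma> g h Y))
        = cmp C (\<gamma> g h (tno C X Y)) (cmp C (Tm g (J h X Y)) (J g (To h X) (To h Y))))
   \<comment> \<open>cocycle condition\<close>
   \<and> (\<forall>g h k. \<forall>X\<in>idl_ob C (one (- k)) \<inter> idl_ob C (one (- k + - h)) \<inter> idl_ob C (one (- k + - h + - g)).
          cmp C (\<gamma> (g + h) k X) (\<gamma> g h (To k X)) = cmp C (\<gamma> g (h + k) X) (Tm g (\<gamma> h k X)))
   \<comment> \<open>unit conditions\<close>
   \<and> (\<forall>g. \<forall>X\<in>idl_ob C (one (- g)).
          cmp C (\<gamma> 0 g X) (u (To g X)) = idm C (To g X)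
        \<and> cmp C (u (To g X)) (\<gamma> 0 g X) = idm C (To 0 (To g X))
        \<and> cmp C (\<gamma> g 0 X) (Tm g (u X)) = idm C (To g X)
        \<and> cmp C (Tm g (u X)) (\<gamma> g 0 X) = idm C (To g (To 0 X)))"

end

theory Submission
  imports Defs
begin

definition isor :: "('o,'m) mcat \<Rightarrow> 'o \<Rightarrow> 'o \<Rightarrow> bool" where
  "isor C X Y \<longleftrightarrow> (\<exists>f. hom C f X Y \<and> iso_arr C f)"

lemma smcD:
  assumes "strict_monoidal_cat C"
  shows "\<And>f. f\<in>Ar C \<Longrightarrow> src C f \<in> Ob C \<and> tgt C f \<in> Ob C"
    and "\<And>X. X\<in>Ob C \<Longrightarrow> idm C X \<in> Ar C \<and> src C (idm C X) = X \<and> tgt C (idm C X) = X"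
    and "\<And>f g. f\<in>Ar C \<Longrightarrow> g\<in>Ar C \<Longrightarrow> src C g = tgt C f \<Longrightarrow> cmp C g f \<in> Ar C \<and> src C (cmp C g f) = src C f \<and> tgt C (cmp C g f) = tgt C g"
    and "\<And>f. f\<in>Ar C \<Longrightarrow> cmp C f (idm C (src C f)) = f"
    and "\<And>f. f\<in>Ar C \<Longrightarrow> cmp C (idm C (tgt C f)) f = f"
    and "\<And>f g h. f\<in>Ar C \<Longrightarrow> g\<in>Ar C \<Longrightarrow> h\<in>Ar C \<Longrightarrow> src C g = tgt C f \<Longrightarrow> src C h = tgt C g \<Longrightarrow>
         cmp C h (cmp C g f) = cmp C (cmp C h g) f"
    and "unt C \<in> Ob C"
    and "\<And>X Y. X\<in>Ob C \<Longrightarrow> Y\<in>Ob C \<Longrightarrow> tno C X Y \<in> Ob C"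
    and "\<And>f g. f\<in>Ar C \<Longrightarrow> g\<in>Ar C \<Longrightarrow> tnm C f g \<in> Ar C \<and> src C (tnm C f g) = tno C (src C f) (src C g) \<and> tgt C (tnm C f g) = tno C (tgt C f) (tgt C g)"
    and "\<And>X Y. X\<in>Ob C \<Longrightarrow> Y\<in>Ob C \<Longrightarrow> tnm C (idm C X) (idm C Y) = idm C (tno C X Y)"
    and "\<And>f f' g g'. f\<in>Ar C \<Longrightarrow> f'\<in>Ar C \<Longrightarrow> g\<in>Ar C \<Longrightarrow> g'\<in>Ar C \<Longrightarrow> src C f' = tgt C f \<Longrightarrow> src C g' = tgt C g \<Longrightarrow>
         tnm C (cmp C f' f) (cmp C g' g) = cmp C (tnm C f' g') (tnm C f g)"
    and "\<And>X Y Z. X\<in>Ob C \<Longrightarrow> Y\<in>Ob C \<Longrightarrow> Z\<in>Ob C \<Longrightarrow> tno C (tno C X Y) Z = tno C X (tno C Y Z)"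
  using assms unfolding strict_monoidal_cat_def hom_def by (meson; fail)+

lemma isor_refl:
  assumes "strict_monoidal_cat C" "X \<in> Ob C" shows "isor C X X"
proof -
  note D = smcD[OF assms(1)]
  have "cmp C (idm C X) (idm C X) = idm C X" using D(2)[OF assms(2)] D(4)[of "idm C X"] by simp
  then show ?thesis unfolding isor_def iso_arr_def iso_in_def hom_def
    using D(2)[OF assms(2)] by metis
qed

lemma isor_sym:
  assumes "isor C X Y" shows "isor C Y X"
  using assms unfolding isor_def iso_arr_def iso_in_def hom_def by metis

lemma isor_trans:
  assumes "strict_monoidal_cat C" "isor C X Y" "isor C Y Z" shows "isor C X Z"
proof -
  note D = smcD[OF assms(1)]
  obtain f f' where f: "f \<in> Ar C" "src C f = X" "tgt C f = Y" "f' \<in> Ar C" "src C f' = Y" "tgt C f' = X"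
    "cmp C f' f = idm C X" "cmp C f f' = idm C Y"
    using assms(2) unfolding isor_def iso_arr_def iso_in_def hom_def by auto
  obtain g g' where g: "g \<in> Ar C" "src C g = Y" "tgt C g = Z" "g' \<in> Ar C" "src C g' = Z" "tgt C g' = Y"
    "cmp C g' g = idm C Y" "cmp C g g' = idm C Z"
    using assms(3) unfolding isor_def iso_arr_def iso_in_def hom_def by auto
  have h: "cmp C g f \<in> Ar C" "src C (cmp C g f) = X" "tgt C (cmp C g f) = Z"
    using D(3)[of f g] f g by auto
  have h': "cmp C f' g' \<in> Ar C" "src C (cmp C f' g') = Z" "tgt C (cmp C f' g') = X"
    using D(3)[of g' f'] f g by auto
  have "cmp C (cmp C f' g') (cmp C g f) = cmp C (cmp C (cmp C f' g') g) f"
    using D(6)[of f g "cmp C f' g'"] f g h' by auto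
  also have "cmp C (cmp C f' g') g = cmp C f' (cmp C g' g)"
    using D(6)[of g g' f'] f g by auto
  also have "\<dots> = f'" using g f D(4)[of f'] by simp
  finally have 1: "cmp C (cmp C f' g') (cmp C g f) = idm C X" using f by simp
  have "cmp C (cmp C g f) (cmp C f' g') = cmp C (cmp C (cmp C g f) f') g'"
    using D(6)[of g' f' "cmp C g f"] f g h by auto
  also have "cmp C (cmp C g f) f' = cmp C g (cmp C f f')"
    using D(6)[of f' f g] f g by auto
  also have "\<dots> = g" using g f D(4)[of g] by simp
  finally have 2: "cmp C (cmp C g f) (cmp C f' g') = idm C Z" using g by simp
  show ?thesis unfolding isor_def iso_arr_def iso_in_def hom_def
    using h h' 1 2 by metis
qed

lemma isor_tensor:
  assumes "strict_monoidal_cat C" "isor C X X'" "isor C Y Y'" shows "isor C (tno C X Y) (tno C X' Y')"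
proof -
  note D = smcD[OF assms(1)]
  obtain f f' where f: "f \<in> Ar C" "src C f = X" "tgt C f = X'" "f' \<in> Ar C" "src C f' = X'" "tgt C f' = X"
    "cmp C f' f = idm C X" "cmp C f f' = idm C X'"
    using assms(2) unfolding isor_def iso_arr_def iso_in_def hom_def by auto
  obtain g g' where g: "g \<in> Ar C" "src C g = Y" "tgt C g = Y'" "g' \<in> Ar C" "src C g' = Y'" "tgt C g' = Y"
    "cmp C g' g = idm C Y" "cmp C g g' = idm C Y'"
    using assms(3) unfolding isor_def iso_arr_def iso_in_def hom_def by auto
  have ob: "X \<in> Ob C" "Y \<in> Ob C" "X' \<in> Ob C" "Y' \<in> Ob C" using D(1) f g by metis+
  have 1: "cmp C (tnm C f' g') (tnm C f g) = idm C (tno C X Y)"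
    using D(11)[of f f' g g'] f g D(10) ob by simp
  have 2: "cmp C (tnm C f g) (tnm C f' g') = idm C (tno C X' Y')"
    using D(11)[of f' f g' g] f g D(10) ob by simp
  show ?thesis unfolding isor_def iso_arr_def iso_in_def hom_def
    using D(9)[of f g] D(9)[of f' g'] f g 1 2 by metis
qed

lemma clo_iso:
  assumes "X \<in> clo_ob C O0 M0" "iso_arr C i" "src C i = X"
  shows "tgt C i \<in> clo_ob C O0 M0 \<and> i \<in> clo_ar C O0 M0"
proof
  show "tgt C i \<in> clo_ob C O0 M0" unfolding clo_ob_def
  proof (rule InterI)
    fix Obs assume "Obs \<in> {Obs. \<exists>M. subcat C Obs M \<and> iso_closed C Obs M \<and> O0 \<subseteq> Obs \<and> M0 \<subseteq> M}"
    then obtain M where M: "subcat C Obs M" "iso_closed C Obs M" "O0 \<subseteq> Obs" "M0 \<subseteq> M" by blast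
    have "X \<in> Obs" using assms(1) M unfolding clo_ob_def by blast
    then show "tgt C i \<in> Obs" using M(2) assms(2,3) unfolding iso_closed_def by blast
  qed
  show "i \<in> clo_ar C O0 M0" unfolding clo_ar_def
  proof (rule InterI)
    fix M assume "M \<in> {M. \<exists>Obs. subcat C Obs M \<and> iso_closed C Obs M \<and> O0 \<subseteq> Obs \<and> M0 \<subseteq> M}"
    then obtain Obs where M: "subcat C Obs M" "iso_closed C Obs M" "O0 \<subseteq> Obs" "M0 \<subseteq> M" by blast
    have "X \<in> Obs" using assms(1) M unfolding clo_ob_def by blast
    then show "i \<in> M" using M(2) assms(2,3) unfolding iso_closed_def by blast
  qed
qed

lemma clo_gen: "O0 \<subseteq> clo_ob C O0 M0"
  unfolding clo_ob_def by blast

lemma clo_sub: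
  assumes "strict_monoidal_cat C" "O0 \<subseteq> Ob C" "M0 \<subseteq> Ar C"
  shows "clo_ob C O0 M0 \<subseteq> Ob C" "clo_ar C O0 M0 \<subseteq> Ar C"
proof -
  note D = smcD[OF assms(1)]
  have s: "subcat C (Ob C) (Ar C)" unfolding subcat_def using D(1,2,3) by blast
  have i: "iso_closed C (Ob C) (Ar C)" unfolding iso_closed_def iso_arr_def iso_in_def
    using D(1) by blast
  show "clo_ob C O0 M0 \<subseteq> Ob C" unfolding clo_ob_def using s i assms(2,3) by blast
  show "clo_ar C O0 M0 \<subseteq> Ar C" unfolding clo_ar_def using s i assms(2,3) by blast
qed

lemma idl_sub:
  assumes "strict_monoidal_cat C" "e \<in> Ob C"
  shows "idl_ob C e \<subseteq> Ob C" "idl_ar C e \<subseteq> Ar C"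
proof -
  note D = smcD[OF assms(1)]
  have a: "{tno C e X | X. X \<in> Ob C} \<subseteq> Ob C" using D(8) assms(2) by blast
  have b: "{tnm C (idm C e) f | f. f \<in> Ar C} \<subseteq> Ar C" using D(9) D(2) assms(2) by blast
  show "idl_ob C e \<subseteq> Ob C" "idl_ar C e \<subseteq> Ar C"
    unfolding idl_ob_def idl_ar_def using clo_sub[OF assms(1) a b] by auto
qed

lemma idl_gen:
  assumes "X \<in> Ob C" shows "tno C e X \<in> idl_ob C e"
  unfolding idl_ob_def by (rule subsetD[OF clo_gen]) (use assms in blast)

lemma idl_iso:
  assumes "X \<in> idl_ob C e" "isor C X Y"
  shows "\<exists>k k'. hom C k X Y \<and> hom C k' Y X \<and> cmp C k' k = idm C X \<and> cmp C k k' = idm C Y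
     \<and> k \<in> Ar C \<and> k' \<in> Ar C
     \<and> (\<forall>e. X \<in> idl_ob C e \<longrightarrow> Y \<in> idl_ob C e \<and> k \<in> idl_ar C e \<and> k' \<in> idl_ar C e)"
proof -
  obtain k k' where k: "k \<in> Ar C" "src C k = X" "tgt C k = Y" "k' \<in> Ar C" "src C k' = Y" "tgt C k' = X"
    "cmp C k' k = idm C X" "cmp C k k' = idm C Y"
    using assms(2) unfolding isor_def iso_arr_def iso_in_def hom_def by auto
  have ik1: "iso_arr C k" unfolding iso_arr_def iso_in_def
    by (intro conjI bexI[of _ k']) (simp_all add: k)
  have ik2: "iso_arr C k'" unfolding iso_arr_def iso_in_def
    by (intro conjI bexI[of _ k]) (simp_all add: k)
  have "\<forall>e. X \<in> idl_ob C e \<longrightarrow> Y \<in> idl_ob C e \<and> k \<in> idl_ar C e \<and> k' \<in> idl_ar C e"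
  proof (intro allI impI)
    fix e assume "X \<in> idl_ob C e"
    then have 1: "Y \<in> idl_ob C e \<and> k \<in> idl_ar C e"
      using clo_iso[OF _ ik1 k(2)] k(3) unfolding idl_ob_def idl_ar_def by simp
    then have "k' \<in> idl_ar C e"
      using clo_iso[OF _ ik2 k(5)] unfolding idl_ob_def idl_ar_def by simp
    with 1 show "Y \<in> idl_ob C e \<and> k \<in> idl_ar C e \<and> k' \<in> idl_ar C e" by blast
  qed
  then show ?thesis using k unfolding hom_def by blast
qed

lemma idl_iso_ob:
  assumes "X \<in> idl_ob C e" "isor C X Y" shows "Y \<in> idl_ob C e"
proof -
  from idl_iso[OF assms] obtain k k' where
    "\<forall>e. X \<in> idl_ob C e \<longrightarrow> Y \<in> idl_ob C e \<and> k \<in> idl_ar C e \<and> k' \<in> idl_ar C e"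
    by (elim exE conjE) 
  then show ?thesis using assms(1) by blast
qed

lemma functor_isor:
  assumes "is_functor C Ob1 M1 Ob2 M2 Fo Fm" "M2 \<subseteq> Ar C" "X \<in> Ob1" "Y \<in> Ob1"
    "k \<in> M1" "k' \<in> M1" "hom C k X Y" "hom C k' Y X" "cmp C k' k = idm C X" "cmp C k k' = idm C Y"
  shows "isor C (Fo X) (Fo Y)"
proof -
  have F: "Fm k \<in> M2" "src C (Fm k) = Fo X" "tgt C (Fm k) = Fo Y"
          "Fm k' \<in> M2" "src C (Fm k') = Fo Y" "tgt C (Fm k') = Fo X"
    using assms unfolding is_functor_def hom_def by auto
  have c1: "cmp C (Fm k') (Fm k) = idm C (Fo X)"
    using assms unfolding is_functor_def hom_def by metis
  have c2: "cmp C (Fm k) (Fm k') = idm C (Fo Y)"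
    using assms unfolding is_functor_def hom_def by metis
  show ?thesis unfolding isor_def iso_arr_def iso_in_def hom_def
    using F c1 c2 assms(2) by (metis subsetD)
qed

lemma absorb:
  assumes C: "strict_monoidal_cat C" and ce: "central_idempotent C e \<Phi> \<sigma>" and X: "X \<in> idl_ob C e"
  shows "isor C (tno C e X) X \<and> isor C (tno C X e) X"
proof -
  note D = smcD[OF C]
  have e: "e \<in> Ob C" and Phi: "hom C \<Phi> (tno C e e) e" "iso_arr C \<Phi>"
    and sig: "\<And>A. A \<in> Ob C \<Longrightarrow> hom C (\<sigma> A) (tno C e A) (tno C A e) \<and> iso_arr C (\<sigma> A)"
    using ce unfolding central_idempotent_def by auto
  define Obs where "Obs = {X \<in> Ob C. isor C (tno C e X) X}"
  define M where "M = {f \<in> Ar C. src C f \<in> Obs \<and> tgt C f \<in> Obs}"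
  have sc: "subcat C Obs M" unfolding subcat_def Obs_def M_def using D(1,2,3)
    by (auto simp: Obs_def)
  have ic: "iso_closed C Obs M" unfolding iso_closed_def
  proof (intro allI impI)
    fix i assume a: "iso_arr C i \<and> src C i \<in> Obs"
    have i: "i \<in> Ar C" using a unfolding iso_arr_def iso_in_def by blast
    have h: "isor C (src C i) (tgt C i)" using a i unfolding isor_def hom_def by blast
    have ob: "src C i \<in> Ob C" "tgt C i \<in> Ob C" using D(1) i by auto
    have "isor C (tno C e (tgt C i)) (tno C e (src C i))"
      using isor_tensor[OF C isor_refl[OF C e] isor_sym[OF h]] .
    moreover have "isor C (tno C e (src C i)) (src C i)" using a Obs_def by auto
    ultimately have "isor C (tno C e (tgt C i)) (tgt C i)"
      using isor_trans[OF C isor_trans[OF C] h] by blast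
    then show "tgt C i \<in> Obs \<and> i \<in> M" using ob i a unfolding Obs_def M_def by auto
  qed
  have g0: "{tno C e X | X. X \<in> Ob C} \<subseteq> Obs"
  proof
    fix Z assume "Z \<in> {tno C e X | X. X \<in> Ob C}"
    then obtain Y where Y: "Y \<in> Ob C" "Z = tno C e Y" by blast
    have "isor C (tno C e e) e" using Phi unfolding isor_def by blast
    from isor_tensor[OF C this isor_refl[OF C Y(1)]]
    have "isor C (tno C e (tno C e Y)) (tno C e Y)" using D(12)[OF e e Y(1)] by simp
    then show "Z \<in> Obs" using Y D(8) e unfolding Obs_def by auto
  qed
  have m0: "{tnm C (idm C e) f | f. f \<in> Ar C} \<subseteq> M"
  proof
    fix m assume "m \<in> {tnm C (idm C e) f | f. f \<in> Ar C}"
    then obtain f where f: "f \<in> Ar C" "m = tnm C (idm C e) f" by blast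
    have m: "m \<in> Ar C" "src C m = tno C e (src C f)" "tgt C m = tno C e (tgt C f)"
      using D(9)[of "idm C e" f] D(2)[OF e] f by auto
    show "m \<in> M" using m g0 D(1)[OF f(1)] unfolding M_def by auto
  qed
  have fam: "Obs \<in> {Obs. \<exists>M. subcat C Obs M \<and> iso_closed C Obs M \<and> {tno C e X | X. X \<in> Ob C} \<subseteq> Obs
      \<and> {tnm C (idm C e) f | f. f \<in> Ar C} \<subseteq> M}"
    using sc ic g0 m0 by blast
  have "X \<in> Obs" using InterD[OF X[unfolded idl_ob_def clo_ob_def] fam] .
  then have 1: "isor C (tno C e X) X" unfolding Obs_def by blast
  have XO: "X \<in> Ob C" using \<open>X \<in> Obs\<close> Obs_def by blast
  have "isor C (tno C e X) (tno C X e)" using sig[OF XO] unfolding isor_def by blast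
  then have "isor C (tno C X e) (tno C e X)" by (rule isor_sym)
  with 1 show ?thesis using isor_trans[OF C] by blast
qed

lemma iso_in_arr: "iso_in C M i \<Longrightarrow> M \<subseteq> Ar C \<Longrightarrow> iso_arr C i"
  unfolding iso_arr_def iso_in_def by blast

theorem lemma3p6:
  fixes C :: "('o, 'm) mcat"
    and one :: "'g::group_add \<Rightarrow> 'o"
  assumes "strict_monoidal_cat C"
    and "partial_action C one \<Phi> \<sigma> To Tm J \<phi> u \<gamma>"
  shows "\<forall>g h. \<exists>f. hom C f (tno C (one g) (one (g + h))) (To g (tno C (one (- g)) (one h)))
                   \<and> iso_arr C f"
proof (intro allI)
  fix g h
  have C: "strict_monoidal_cat C" by fact
  note D = smcD[OF C]
  have ci0: "\<forall>x. central_idempotent C (one x) (\<Phi> x) (\<sigma> x)"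
    using assms(2) unfolding partial_action_def by (rule conjunct1)
  have ci: "\<And>x. central_idempotent C (one x) (\<Phi> x) (\<sigma> x)" using ci0 by blast
  have oneO: "\<And>x. one x \<in> Ob C" using ci unfolding central_idempotent_def by blast
  have sig: "\<And>x A. A \<in> Ob C \<Longrightarrow> isor C (tno C (one x) A) (tno C A (one x))"
    using ci unfolding central_idempotent_def isor_def by blast
  define Ob1 where "Ob1 = idl_ob C (one (- g)) \<inter> idl_ob C (one h)"
  define M1 where "M1 = idl_ar C (one (- g)) \<inter> idl_ar C (one h)"
  define Ob2 where "Ob2 = idl_ob C (one g) \<inter> idl_ob C (one (g + h))"
  define M2 where "M2 = idl_ar C (one g) \<inter> idl_ar C (one (g + h))"
  have pa: "\<forall>g h. is_equivalence C
               (idl_ob C (one (- g)) \<inter> idl_ob C (one h)) (idl_ar C (one (- g)) \<inter> idl_ar C (one h))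
               (idl_ob C (one g) \<inter> idl_ob C (one (g + h))) (idl_ar C (one g) \<inter> idl_ar C (one (g + h)))
               (To g) (Tm g)
          \<and> semigroupal C
               (idl_ob C (one (- g)) \<inter> idl_ob C (one h)) (idl_ar C (one (- g)) \<inter> idl_ar C (one h))
               (idl_ob C (one g) \<inter> idl_ob C (one (g + h))) (idl_ar C (one g) \<inter> idl_ar C (one (g + h)))
               (To g) (Tm g) (J g)"
    using conjunct1[OF conjunct2[OF conjunct2[OF conjunct2[OF assms(2)[unfolded partial_action_def]]]]] .
  have eq: "is_equivalence C Ob1 M1 Ob2 M2 (To g) (Tm g)"
    and sg: "semigroupal C Ob1 M1 Ob2 M2 (To g) (Tm g) (J g)"
    unfolding Ob1_def M1_def Ob2_def M2_def using pa by blast+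
  have Ffun: "is_functor C Ob1 M1 Ob2 M2 (To g) (Tm g)" using eq unfolding is_equivalence_def by blast
  have M2A: "M2 \<subseteq> Ar C" unfolding M2_def using idl_sub[OF C oneO] by blast
  have Ob2O: "Ob2 \<subseteq> Ob C" unfolding Ob2_def using idl_sub[OF C oneO] by blast
  have Ob1O: "Ob1 \<subseteq> Ob C" unfolding Ob1_def using idl_sub[OF C oneO] by blast
  have pair: "tno C (one x) (one y) \<in> idl_ob C (one x) \<inter> idl_ob C (one y)" for x y
  proof -
    have 1: "tno C (one x) (one y) \<in> idl_ob C (one x)" by (rule idl_gen[OF oneO])
    have 2: "tno C (one y) (one x) \<in> idl_ob C (one y)" by (rule idl_gen[OF oneO])
    have "isor C (tno C (one y) (one x)) (tno C (one x) (one y))" using sig oneO by blast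
    then have "tno C (one x) (one y) \<in> idl_ob C (one y)" by (rule idl_iso_ob[OF 2])
    with 1 show ?thesis by blast
  qed
  define E where "E = tno C (one (- g)) (one h)"
  define U where "U = tno C (one g) (one (g + h))"
  have E1: "E \<in> Ob1" unfolding E_def Ob1_def using pair by blast
  have U2: "U \<in> Ob2" unfolding U_def Ob2_def using pair by blast
  obtain X i where X: "X \<in> Ob1" "hom C i (To g X) U" "iso_in C M2 i"
    using eq U2 unfolding is_equivalence_def by blast
  have XU: "isor C (To g X) U" using X iso_in_arr[OF X(3) M2A] unfolding isor_def by blast
  have XO: "X \<in> Ob C" using X Ob1O by blast
  have EO: "one (- g) \<in> Ob C" "one h \<in> Ob C" using oneO by auto
  have "isor C (tno C (one h) X) X" using absorb[OF C ci] X(1) unfolding Ob1_def by blast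
  then have "isor C (tno C (one (- g)) (tno C (one h) X)) (tno C (one (- g)) X)"
    using isor_tensor[OF C isor_refl[OF C EO(1)]] by blast
  moreover have "isor C (tno C (one (- g)) X) X" using absorb[OF C ci] X(1) unfolding Ob1_def by blast
  ultimately have "isor C (tno C E X) X" unfolding E_def D(12)[OF EO XO] by (rule isor_trans[OF C])
  then have XEX: "isor C X (tno C E X)" by (rule isor_sym)
  have X1: "X \<in> idl_ob C (one (- g))" using X(1) Ob1_def by blast
  obtain k k' where k: "hom C k X (tno C E X)" "hom C k' (tno C E X) X" "cmp C k' k = idm C X"
     "cmp C k k' = idm C (tno C E X)"
     "\<forall>e. X \<in> idl_ob C e \<longrightarrow> tno C E X \<in> idl_ob C e \<and> k \<in> idl_ar C e \<and> k' \<in> idl_ar C e"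
    using idl_iso[OF X1 XEX] by (elim exE conjE) (unfold hom_def, blast)
  have EX1: "tno C E X \<in> Ob1" and kM: "k \<in> M1" "k' \<in> M1"
    using k(5) X(1) unfolding Ob1_def M1_def by blast+
  have 1: "isor C (To g X) (To g (tno C E X))"
    using functor_isor[OF Ffun M2A X(1) EX1 kM k(1-4)] .
  have 2: "isor C (tno C (To g E) (To g X)) (To g (tno C E X))"
  proof -
    have "hom C (J g E X) (tno C (To g E) (To g X)) (To g (tno C E X)) \<and> iso_in C M2 (J g E X)"
      using sg E1 X(1) unfolding semigroupal_def by blast
    then show ?thesis using iso_in_arr[OF _ M2A] unfolding isor_def by blast
  qed
  have TE: "To g E \<in> Ob2" using Ffun E1 unfolding is_functor_def by blast
  have TEO: "To g E \<in> Ob C" using TE Ob2O by blast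
  have 3: "isor C (tno C (To g E) (To g X)) (tno C (To g E) U)"
    using isor_tensor[OF C isor_refl[OF C TEO] XU] .
  have ab: "one g \<in> Ob C" "one (g + h) \<in> Ob C" using oneO by auto
  have 4: "tno C (To g E) U = tno C (tno C (To g E) (one g)) (one (g + h))"
    unfolding U_def using D(12)[OF TEO ab] by simp
  have "isor C (tno C (To g E) (one g)) (To g E)"
    using absorb[OF C ci] TE unfolding Ob2_def by blast
  then have 5: "isor C (tno C (tno C (To g E) (one g)) (one (g + h))) (tno C (To g E) (one (g + h)))"
    using isor_tensor[OF C _ isor_refl[OF C ab(2)]] by blast
  have 6: "isor C (tno C (To g E) (one (g + h))) (To g E)"
    using absorb[OF C ci] TE unfolding Ob2_def by blast
  have 7: "isor C (tno C (To g E) U) (To g E)"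
    unfolding 4 using isor_trans[OF C 5 6] .
  have 8: "isor C U (To g X)" using isor_sym[OF XU] .
  have 9: "isor C (To g X) (tno C (To g E) (To g X))" using isor_trans[OF C 1 isor_sym[OF 2]] .
  have "isor C U (To g E)"
    using isor_trans[OF C isor_trans[OF C 8 9] isor_trans[OF C 3 7]] .
  then show "\<exists>f. hom C f (tno C (one g) (one (g + h))) (To g (tno C (one (- g)) (one h))) \<and> iso_arr C f"
    unfolding isor_def U_def E_def .
qed
end
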